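(* Let $H\in(\tfrac12,1)$. For each integer $n>1$ there exists a unique $x_n\in(0,n-1)$ such that the function $g_n(x)=x^{\frac12-H}\phi_n^H(x)$ is strictly decreasing on $(0,x_n)$ and strictly increasing on $(x_n,n-1)$. Moreover $\lim_{n\to\infty}\frac{x_n}{n-1}=H-\frac12$.
   Context: $\phi_n^H(x)=(n-x)^{H-\frac12}-(n-1-x)^{H-\frac12}$ for $x\in(0,n-1)$; $g_n:(0,n-1)\to(0,\infty)$. *)

theory Defs
  imports "HOL-Analysis.Analysis"
begin

definition phiH :: "real \<Rightarrow> nat \<Rightarrow> real \<Rightarrow> real" where
  "phiH H n x = (real n - x) powr (H - 1/2) - (real n - 1 - x) powr (H - 1/2)"

definition gH :: "real \<Rightarrow> nat \<Rightarrow> real \<Rightarrow> real" where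
  "gH H n x = x powr (1/2 - H) * phiH H n x"

definition turning_point :: "real \<Rightarrow> nat \<Rightarrow> real \<Rightarrow> bool" where
  "turning_point H n x \<longleftrightarrow> x \<in> {0<..<real n - 1} \<and>
     strict_antimono_on {0<..<x} (gH H n) \<and>
     strict_mono_on {x<..<real n - 1} (gH H n)"

end

theory Submission
  imports Defs
begin

lemma powr_mvt:
  fixes u v r :: real
  assumes "0 < u" "u < v"
  shows "\<exists>z. u < z \<and> z < v \<and> v powr r - u powr r = (v - u) * (r * z powr (r - 1))"
proof -
  have d: "\<And>s. s > 0 \<Longrightarrow> ((\<lambda>s. s powr r) has_real_derivative r * s powr (r - 1)) (at s)"
    by (rule has_real_derivative_powr)
  have c: "continuous_on {u..v} (\<lambda>s. s powr r)"
  proof (rule continuous_at_imp_continuous_on, intro ballI)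
    fix s assume "s \<in> {u..v}" hence "s > 0" using assms by auto
    thus "isCont (\<lambda>s. s powr r) s" using d DERIV_isCont by blast
  qed
  obtain l z where z: "u < z" "z < v" "DERIV (\<lambda>s. s powr r) z :> l" "v powr r - u powr r = (v - u) * l"
  proof -
    have "\<And>x. u < x \<Longrightarrow> x < v \<Longrightarrow> (\<lambda>s. s powr r) differentiable (at x)"
    proof -
      fix x assume "u < x" "x < v"
      hence "x > 0" using assms by linarith
      thus "(\<lambda>s. s powr r) differentiable (at x)" using d real_differentiable_def by blast
    qed
    from MVT[OF assms(2) c this] show ?thesis using that by blast
  qed
  have "l = r * z powr (r - 1)" using DERIV_unique[OF z(3) d] z assms by auto
  thus ?thesis using z by blast
qed

lemma pm1: "0 < (s::real) \<Longrightarrow> s powr (a - 1) = s powr a / s"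
  by (simp add: powr_diff)
lemma pm2: "0 < (s::real) \<Longrightarrow> s powr (a - 2) = s powr a / s^2"
  by (simp add: powr_diff power2_eq_square)

lemma bnd_a:
  fixes u a :: real
  assumes "0 < u" "0 < a" "a < 1"
  shows "a * (u+1) powr (a-1) \<le> (u+1) powr a - u powr a"
    "(u+1) powr a - u powr a \<le> a * u powr (a-1)"
proof -
  obtain z where z: "u < z" "z < u+1" "(u+1) powr a - u powr a = (u+1 - u) * (a * z powr (a - 1))"
    using powr_mvt[of u "u+1" a] assms by auto
  have "(u+1) powr (a-1) \<le> z powr (a-1)" "z powr (a-1) \<le> u powr (a-1)"
    using powr_mono2'[of "a-1" z "u+1"] powr_mono2'[of "a-1" u z] z assms by auto
  thus "a * (u+1) powr (a-1) \<le> (u+1) powr a - u powr a"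
    "(u+1) powr a - u powr a \<le> a * u powr (a-1)" using z assms by auto
qed

lemma bnd_b:
  fixes u a :: real
  assumes "0 < u" "0 < a" "a < 1"
  shows "(1-a) * (u+1) powr (a-2) \<le> u powr (a-1) - (u+1) powr (a-1)"
    "u powr (a-1) - (u+1) powr (a-1) \<le> (1-a) * u powr (a-2)"
proof -
  obtain z where z: "u < z" "z < u+1" "(u+1) powr (a-1) - u powr (a-1) = (u+1 - u) * ((a-1) * z powr (a - 1 - 1))"
    using powr_mvt[of u "u+1" "a-1"] assms by auto
  have "(u+1) powr (a-2) \<le> z powr (a-2)" "z powr (a-2) \<le> u powr (a-2)"
    using powr_mono2'[of "a-2" z "u+1"] powr_mono2'[of "a-2" u z] z assms by auto
  moreover have "u powr (a-1) - (u+1) powr (a-1) = (1-a) * z powr (a-2)" using z(3) by (simp add: algebra_simps)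
  ultimately show "(1-a) * (u+1) powr (a-2) \<le> u powr (a-1) - (u+1) powr (a-1)"
    "u powr (a-1) - (u+1) powr (a-1) \<le> (1-a) * u powr (a-2)" using assms
    by (auto intro: mult_left_mono)
qed

definition hf :: "real \<Rightarrow> real \<Rightarrow> real \<Rightarrow> real" where
  "hf a N x = x * ((N-1-x) powr (a-1) - (N-x) powr (a-1)) - ((N-x) powr a - (N-1-x) powr a)"

lemma g_deriv:
  fixes a N x :: real
  assumes "0 < x" "x < N - 1"
  shows "((\<lambda>x. x powr (-a) * ((N-x) powr a - (N-1-x) powr a)) has_real_derivative
          (a * x powr (-a-1) * hf a N x)) (at x)"
proof -
  have p: "N - x > 0" "N - 1 - x > 0" using assms by auto
  have "((\<lambda>x. x powr (-a) * ((N-x) powr a - (N-1-x) powr a)) has_real_derivative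
     (-a * x powr (-a-1) * ((N-x) powr a - (N-1-x) powr a) + x powr (-a) * (a * (N-x) powr (a-1) * (-1) - a * (N-1-x) powr (a-1) * (-1)))) (at x)"
    using p assms by (auto intro!: derivative_eq_intros)
  moreover have "x powr (-a) = x * x powr (-a-1)"
    using assms by (simp add: powr_diff)
  ultimately show ?thesis unfolding hf_def by (simp add: algebra_simps)
qed

lemma h_deriv:
  fixes a N x :: real
  assumes "0 \<le> x" "x < N - 1"
  shows "(hf a N has_real_derivative
     ((1-a)*((N-1-x) powr (a-1) - (N-x) powr (a-1)) + x*(1-a)*((N-1-x) powr (a-2) - (N-x) powr (a-2)))) (at x)"
proof -
  have p: "N - x > 0" "N - 1 - x > 0" using assms by auto
  have e: "hf a N = (\<lambda>x. x * ((N-1-x) powr (a-1) - (N-x) powr (a-1)) - ((N-x) powr a - (N-1-x) powr a))"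
    by (rule ext) (simp add: hf_def)
  have "((\<lambda>x. x * ((N-1-x) powr (a-1) - (N-x) powr (a-1)) - ((N-x) powr a - (N-1-x) powr a)) has_real_derivative
     (1 * ((N-1-x) powr (a-1) - (N-x) powr (a-1)) + x * ((a-1) * (N-1-x) powr (a-1-1) * (-1) - (a-1) * (N-x) powr (a-1-1) * (-1))
      - (a * (N-x) powr (a-1) * (-1) - a * (N-1-x) powr (a-1) * (-1)))) (at x)"
    using p by (auto intro!: derivative_eq_intros)
  thus ?thesis unfolding e by (simp add: algebra_simps)
qed

lemma h_cont:
  fixes a N p q :: real
  assumes "0 \<le> p" "q < N - 1"
  shows "continuous_on {p..q} (hf a N)"
proof (rule continuous_at_imp_continuous_on, intro ballI)
  fix s assume "s \<in> {p..q}" hence "0 \<le> s" "s < N - 1" using assms by auto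
  thus "isCont (hf a N) s" using h_deriv DERIV_isCont by blast
qed

lemma h_mono:
  fixes a N p q :: real
  assumes "0 < a" "a < 1" "0 \<le> p" "p < q" "q < N - 1"
  shows "hf a N p < hf a N q"
proof (rule DERIV_pos_imp_increasing_open[OF assms(4) _ h_cont[OF assms(3,5)]])
  fix x assume x: "p < x" "x < q"
  have u: "0 < N-1-x" "N-1-x < N-x" using x assms by auto
  have "(N-x) powr (a-1) < (N-1-x) powr (a-1)"
    by (rule powr_less_mono2_neg) (use u assms in auto)
  moreover have "(N-x) powr (a-2) \<le> (N-1-x) powr (a-2)"
    by (rule powr_mono2') (use u assms in auto)
  ultimately have "(1-a)*((N-1-x) powr (a-1) - (N-x) powr (a-1)) + x*(1-a)*((N-1-x) powr (a-2) - (N-x) powr (a-2)) > 0"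
    using assms x by (intro add_pos_nonneg mult_pos_pos mult_nonneg_nonneg) auto
  thus "\<exists>y. DERIV (hf a N) x :> y \<and> y > 0"
    using h_deriv[of x N a] x assms by auto
qed

lemma h_zero:
  fixes a N :: real
  assumes "0 < a" "1 < N"
  shows "hf a N 0 < 0"
  using powr_less_mono2[of a "N-1" N] assms unfolding hf_def by auto

lemma h_pos_pt:
  fixes a N :: real
  assumes "0 < a" "a < 1/2" "2 \<le> N"
  defines "s \<equiv> (1 - 2*a)/2"
  shows "0 < N - 1 - s^2" "hf a N (N - 1 - s^2) > 0"
proof -
  have s: "0 < s" "s < 1/2" using assms by (auto simp: s_def)
  have s2: "0 < s^2" "s^2 < 1/4" using s power_strict_mono[of s "1/2" 2] by (auto simp: power2_eq_square)
  define x where "x = N - 1 - s^2"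
  have x: "3/4 < x" using s2 assms by (auto simp: x_def)
  thus "0 < N - 1 - s^2" by (simp add: x_def)
  have e1: "N - 1 - x = s^2" "N - x = s^2 + 1" by (auto simp: x_def)
  have A: "(s^2+1) powr (a-1) \<le> 1"
    using powr_mono2'[of "a-1" 1 "s^2+1"] assms s2 by auto
  have B: "(s^2+1) powr a - (s^2) powr a \<le> a * (s^2) powr (a-1)"
    using bnd_a(2)[of "s^2" a] s2 assms by auto
  have C: "(s^2) powr (-1/2) \<le> (s^2) powr (a-1)"
    by (rule powr_mono') (use assms s2 in auto)
  have D: "(s^2) powr (-1/2) = 1 / s"
    using s by (simp add: powr_minus_divide powr_half_sqrt[symmetric])
  have "hf a N x = x * ((s^2) powr (a-1) - (s^2+1) powr (a-1)) - ((s^2+1) powr a - (s^2) powr a)"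
    unfolding hf_def e1 by simp
  also have "\<dots> \<ge> x * ((s^2) powr (a-1) - 1) - a * (s^2) powr (a-1)"
  proof -
    have "x * (s^2+1) powr (a-1) \<le> x" using mult_left_mono[OF A, of x] x by simp
    thus ?thesis using B by (simp add: algebra_simps)
  qed
  finally have E: "hf a N x \<ge> (x - a) * (s^2) powr (a-1) - x" by (simp add: algebra_simps)
  have "(x - a) * (1/s) \<le> (x - a) * (s^2) powr (a-1)"
    using C D x assms by (intro mult_left_mono) auto
  moreover have "(x - a) * (1/s) > x"
  proof -
    have "a * x > a * (3/4)" using x assms by (intro mult_strict_left_mono) auto
    moreover have "x * s = x/2 - a*x" unfolding s_def by (simp add: field_simps)
    ultimately have "x * s < x - a" using x assms by linarith
    thus ?thesis using s by (simp add: field_simps)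
  qed
  ultimately show "hf a N (N - 1 - s^2) > 0" using E by (simp add: x_def)
qed

lemma gH_eq: "gH H n = (\<lambda>x. x powr (-(H-1/2)) * ((real n - x) powr (H-1/2) - (real n - 1 - x) powr (H-1/2)))"
  by (rule ext) (simp add: gH_def phiH_def)

lemma g_cont:
  fixes a N p q :: real
  assumes "0 < p" "q < N - 1"
  shows "continuous_on {p..q} (\<lambda>x. x powr (-a) * ((N-x) powr a - (N-1-x) powr a))"
proof (rule continuous_at_imp_continuous_on, intro ballI)
  fix s assume "s \<in> {p..q}" hence "0 < s" "s < N - 1" using assms by auto
  thus "isCont (\<lambda>x. x powr (-a) * ((N-x) powr a - (N-1-x) powr a)) s" using g_deriv DERIV_isCont by blast
qed

lemma tp_exists:
  fixes H :: real and n :: nat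
  assumes "1/2 < H" "H < 1" "1 < n"
  shows "\<exists>x0. turning_point H n x0 \<and> hf (H-1/2) (real n) x0 = 0"
proof -
  define a where "a = H - 1/2"
  define N where "N = real n"
  have a: "0 < a" "a < 1/2" using assms by (auto simp: a_def)
  have N: "2 \<le> N" using assms by (auto simp: N_def)
  define q where "q = N - 1 - ((1 - 2*a)/2)^2"
  have q: "0 < q" "hf a N q > 0" using h_pos_pt[OF a N] by (auto simp: q_def)
  have qN: "q < N - 1" using a by (simp add: q_def)
  obtain x0 where x0: "0 \<le> x0" "x0 \<le> q" "hf a N x0 = 0"
    using IVT'[of "hf a N" 0 0 q] h_zero[of a N] q h_cont[of 0 q N a] qN a N by auto
  have x0p: "0 < x0" using x0 h_zero[of a N] a N by (cases "x0 = 0") auto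
  have x0N: "x0 < N - 1" using x0 qN by auto
  define g where "g = (\<lambda>x. x powr (-a) * ((N-x) powr a - (N-1-x) powr a))"
  have gg: "gH H n = g" unfolding gH_eq g_def a_def N_def by simp
  have dec: "strict_antimono_on {0<..<x0} (gH H n)"
    unfolding gg monotone_on_def
  proof (intro ballI impI)
    fix r s assume r0: "r \<in> {0<..<x0}" and s0: "s \<in> {0<..<x0}" and lt0: "r < s"
    have rs: "r \<in> {0<..<x0} \<and> s \<in> {0<..<x0} \<and> r < s" using r0 s0 lt0 by blast
    show "g s < g r"
    proof (rule DERIV_neg_imp_decreasing_open[of r s g])
      show "r < s" using rs by auto
      show "continuous_on {r..s} g" unfolding g_def using g_cont[of r s N a] rs x0N by auto
      fix y assume y: "r < y" "y < s"
      have "hf a N y < hf a N x0" using h_mono[of a y x0 N] a y rs x0N by auto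
      hence "a * y powr (-a-1) * hf a N y < 0" using x0 a y rs
        by (simp add: mult_pos_neg)
      thus "\<exists>d. DERIV g y :> d \<and> d < 0" unfolding g_def using g_deriv[of y N a] y rs x0N by auto
    qed
  qed
  have inc: "strict_mono_on {x0<..<real n - 1} (gH H n)"
    unfolding gg monotone_on_def
  proof (intro ballI impI)
    fix r s assume r0: "r \<in> {x0<..<real n - 1}" and s0: "s \<in> {x0<..<real n - 1}" and lt0: "r < s"
    have rs: "r \<in> {x0<..<real n - 1} \<and> s \<in> {x0<..<real n - 1} \<and> r < s" using r0 s0 lt0 by blast
    show "g r < g s"
    proof (rule DERIV_pos_imp_increasing_open[of r s g])
      show "r < s" using rs by auto
      show "continuous_on {r..s} g" unfolding g_def using g_cont[of r s N a] rs x0p N_def by auto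
      fix y assume y: "r < y" "y < s"
      have "hf a N x0 < hf a N y" using h_mono[of a x0 y N] a y rs x0p N_def by auto
      hence "a * y powr (-a-1) * hf a N y > 0" using x0 a y rs x0p
        by simp
      thus "\<exists>d. DERIV g y :> d \<and> d > 0" unfolding g_def using g_deriv[of y N a] y rs x0p N_def by auto
    qed
  qed
  have "turning_point H n x0" unfolding turning_point_def using x0p x0N dec inc N_def by auto
  thus ?thesis using x0 a_def N_def by auto
qed

lemma tp_unique:
  assumes "turning_point H n x" "turning_point H n y"
  shows "x = y"
proof (rule ccontr)
  have gen: False if "turning_point H n x" "turning_point H n y" "x < y" for x y
  proof -
    define p where "p = x + (y - x)/3"
    define q where "q = x + 2*(y - x)/3"
    have pq: "x < p" "p < q" "q < y" using that(3) by (auto simp: p_def q_def field_simps)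
    have y1: "y < real n - 1" using that(2) unfolding turning_point_def by auto
    have "gH H n p < gH H n q" using that(1) pq y1 unfolding turning_point_def monotone_on_def by auto
    moreover have "gH H n q < gH H n p" using that(2) pq that(1) unfolding turning_point_def monotone_on_def
      by (metis greaterThanLessThan_iff less_trans)
    ultimately show False by simp
  qed
  assume "x \<noteq> y"
  thus False using gen[OF assms] gen[OF assms(2,1)] by linarith
qed

lemma h_neg_at:
  fixes a N x :: real
  assumes a: "0 < a" "a < 1" and x: "0 < x" and u: "0 < N - 1 - x"
    and P: "x * (1-a) * ((N-1-x)+1) \<le> a * (N-1-x)^2"
  shows "hf a N x < 0"
proof -
  define u where "u = N - 1 - x"
  have u0: "0 < u" using u by (simp add: u_def)
  have e: "N - x = u + 1" by (simp add: u_def)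
  define U where "U = u powr a"
  define V where "V = (u+1) powr a"
  have UV: "0 < U" "U < V" using u0 a powr_less_mono2[of a u "u+1"] by (auto simp: U_def V_def)
  have "hf a N x = x * (u powr (a-1) - (u+1) powr (a-1)) - ((u+1) powr a - u powr a)"
    unfolding hf_def e u_def by simp
  also have "\<dots> \<le> x * ((1-a) * u powr (a-2)) - a * (u+1) powr (a-1)"
    using bnd_b(2)[OF u0 a] bnd_a(1)[OF u0 a] x by (smt (verit) mult_left_mono)
  also have "\<dots> = x * ((1-a) * (U / u^2)) - a * (V / (u+1))"
    using u0 by (simp add: pm1 pm2 U_def V_def)
  also have "\<dots> = (x*(1-a)*(u+1)) * U / (u^2*(u+1)) - (a*u^2) * V / (u^2*(u+1))"
  proof -
    have "(x*(1-a)*(u+1)) * U / (u^2*(u+1)) = ((x*(1-a)*U)*(u+1)) / (u^2*(u+1))" by (simp add: ac_simps)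
    also have "\<dots> = (x*(1-a)*U) / u^2" using u0 by (intro nonzero_mult_divide_mult_cancel_right) auto
    finally have "x * ((1-a) * (U / u^2)) = (x*(1-a)*(u+1)) * U / (u^2*(u+1))" by simp
    moreover have "a * (V / (u+1)) = (a*u^2) * V / (u^2*(u+1))"
    proof -
      have "(a*u^2) * V / (u^2*(u+1)) = ((a*V)*u^2) / ((u+1)*u^2)" by (simp add: ac_simps)
      also have "\<dots> = (a*V) / (u+1)" using u0 by (intro nonzero_mult_divide_mult_cancel_right) auto
      finally show ?thesis by simp
    qed
    ultimately show ?thesis by simp
  qed
  also have "\<dots> < 0"
  proof -
    have c: "0 < x*(1-a)*(u+1)" using x a u0 by auto
    have "(x*(1-a)*(u+1)) * U < (x*(1-a)*(u+1)) * V" using c UV by (intro mult_strict_left_mono) auto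
    also have "\<dots> \<le> (a*u^2) * V" using P UV by (intro mult_right_mono) (auto simp: u_def)
    finally have "(x*(1-a)*(u+1)) * U < (a*u^2) * V" .
    hence "(x*(1-a)*(u+1)) * U - (a*u^2) * V < 0" by simp
    hence "((x*(1-a)*(u+1)) * U - (a*u^2) * V) / (u^2*(u+1)) < 0" using u0 by (intro divide_neg_pos) auto
    thus ?thesis by (simp add: diff_divide_distrib)
  qed
  finally show ?thesis .
qed

lemma h_pos_at:
  fixes a N x :: real
  assumes a: "0 < a" "a < 1" and x: "0 < x" and u: "0 < N - 1 - x"
    and P: "a * ((N-1-x)+1)^2 \<le> x * (1-a) * (N-1-x)"
  shows "hf a N x > 0"
proof -
  define u where "u = N - 1 - x"
  have u0: "0 < u" using u by (simp add: u_def)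
  have e: "N - x = u + 1" by (simp add: u_def)
  define U where "U = u powr a"
  define V where "V = (u+1) powr a"
  have UV: "0 < U" "U < V" using u0 a powr_less_mono2[of a u "u+1"] by (auto simp: U_def V_def)
  have "hf a N x = x * (u powr (a-1) - (u+1) powr (a-1)) - ((u+1) powr a - u powr a)"
    unfolding hf_def e u_def by simp
  also have "\<dots> \<ge> x * ((1-a) * (u+1) powr (a-2)) - a * u powr (a-1)"
    using bnd_b(1)[OF u0 a] bnd_a(2)[OF u0 a] x by (smt (verit) mult_left_mono)
  moreover have "x * ((1-a) * (u+1) powr (a-2)) - a * u powr (a-1) = x * ((1-a) * (V / (u+1)^2)) - a * (U / u)"
    using u0 by (simp add: pm1 pm2 U_def V_def)
  moreover have "x * ((1-a) * (V / (u+1)^2)) - a * (U / u) = (x*(1-a)*u) * V / (u*(u+1)^2) - (a*(u+1)^2) * U / (u*(u+1)^2)"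
  proof -
    have "(x*(1-a)*u) * V / (u*(u+1)^2) = ((x*(1-a)*V)*u) / ((u+1)^2*u)" by (simp add: ac_simps)
    also have "\<dots> = (x*(1-a)*V) / (u+1)^2" using u0 by (intro nonzero_mult_divide_mult_cancel_right) auto
    finally have "x * ((1-a) * (V / (u+1)^2)) = (x*(1-a)*u) * V / (u*(u+1)^2)" by simp
    moreover have "a * (U / u) = (a*(u+1)^2) * U / (u*(u+1)^2)"
    proof -
      have "(a*(u+1)^2) * U / (u*(u+1)^2) = ((a*U)*(u+1)^2) / (u*(u+1)^2)" by (simp add: ac_simps)
      also have "\<dots> = (a*U) / u" using u0 by (intro nonzero_mult_divide_mult_cancel_right) auto
      finally show ?thesis by simp
    qed
    ultimately show ?thesis by simp
  qed
  moreover have "\<dots> > 0"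
  proof -
    have c: "0 < a*(u+1)^2" using a u0 by auto
    have "(a*(u+1)^2) * U < (a*(u+1)^2) * V" using c UV by (intro mult_strict_left_mono) auto
    also have "\<dots> \<le> (x*(1-a)*u) * V" using P UV by (intro mult_right_mono) (auto simp: u_def)
    finally have "(a*(u+1)^2) * U < (x*(1-a)*u) * V" .
    hence "(x*(1-a)*u) * V - (a*(u+1)^2) * U > 0" by simp
    hence "((x*(1-a)*u) * V - (a*(u+1)^2) * U) / (u*(u+1)^2) > 0" using u0 by (intro divide_pos_pos) auto
    thus ?thesis by (simp add: diff_divide_distrib)
  qed
  ultimately show ?thesis by linarith
qed

lemma P1:
  fixes a e m :: real
  assumes "0 < e" "e < a" "a < 1" "1 \<le> m" "(a-e)*(1-a)/(e*(1-a+e)) \<le> m"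
  shows "(a-e)*m*(1-a)*((1-a+e)*m+1) \<le> a*((1-a+e)*m)^2"
proof -
  define b where "b = 1-a+e"
  define K where "K = (a-e)*(1-a)"
  have b: "0 < b" using assms by (simp add: b_def)
  have "K/(e*b) \<le> m" using assms by (simp add: K_def b_def)
  hence Km: "K \<le> e*b*m" using assms b by (simp add: divide_le_eq mult.commute)
  have eq: "a*(b*m)^2 - (a-e)*m*(1-a)*(b*m+1) = (e*b*m - K)*m"
    unfolding b_def K_def by (simp add: algebra_simps power2_eq_square)
  have "0 \<le> (e*b*m - K)*m" using Km assms by simp
  thus ?thesis using eq unfolding b_def by simp
qed

lemma P2:
  fixes a e m :: real
  assumes "0 < e" "0 < a" "a + e < 1" "1 \<le> m" "(2*a*(1-a-e)+a)/((1-a-e)*e) \<le> m"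
  shows "a*((1-a-e)*m+1)^2 \<le> (a+e)*m*(1-a)*((1-a-e)*m)"
proof -
  define c where "c = 1-a-e"
  have c: "0 < c" using assms by (simp add: c_def)
  have "(2*a*c+a)/(c*e) \<le> m" using assms by (simp add: c_def)
  hence Km: "2*a*c+a \<le> c*e*m" using assms c by (simp add: divide_le_eq mult.commute)
  have eq: "(a+e)*m*(1-a)*(c*m) - a*(c*m+1)^2 = (c*e*m)*m - 2*a*c*m - a"
    unfolding c_def by (simp add: algebra_simps power2_eq_square)
  have "(2*a*c+a)*m \<le> (c*e*m)*m" using Km assms by (intro mult_right_mono) auto
  moreover have "a \<le> a*m" using assms by simp
  ultimately have "0 \<le> (c*e*m)*m - 2*a*c*m - a" by (simp add: algebra_simps)
  thus ?thesis using eq unfolding c_def by simp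
qed

theorem lemmaA1:
  fixes H :: real
  assumes "1/2 < H" and "H < 1"
  shows "(\<forall>n::nat. n > 1 \<longrightarrow> (\<exists>!x. turning_point H n x)) \<and>
         ((\<lambda>n. (THE x. turning_point H n x) / (real n - 1)) \<longlongrightarrow> H - 1/2) sequentially"
proof -
  define a where "a = H - 1/2"
  have a: "0 < a" "a < 1/2" using assms by (auto simp: a_def)
  define T where "T n = (THE x. turning_point H n x)" for n
  have key: "hf a (real n) (T n) = 0 \<and> 0 < T n \<and> T n < real n - 1" if n: "n > 1" for n
  proof -
    obtain x0 where x0: "turning_point H n x0" "hf a (real n) x0 = 0"
      using tp_exists[OF assms n] a_def by auto
    have "T n = x0" unfolding T_def using x0(1) tp_unique by blast
    thus ?thesis using x0 unfolding turning_point_def by auto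
  qed
  have ex: "\<forall>n::nat. n > 1 \<longrightarrow> (\<exists>!x. turning_point H n x)"
    using tp_exists[OF assms] tp_unique by blast
  have lim: "(\<lambda>n. T n / (real n - 1)) \<longlonglongrightarrow> a"
    unfolding LIMSEQ_iff
  proof (intro allI impI)
    fix r :: real assume r: "0 < r"
    define e where "e = min r (a/2)"
    have e: "0 < e" "e \<le> r" "e \<le> a/2" using r a by (auto simp: e_def)
    define M1 where "M1 = (a-e)*(1-a)/(e*(1-a+e))"
    define M2 where "M2 = (2*a*(1-a-e)+a)/((1-a-e)*e)"
    obtain no :: nat where no: "real no \<ge> max M1 M2 + 2" "no \<ge> 2"
      by (metis le_cases max.cobounded1 max.cobounded2 real_arch_simple nat_le_real_less order_trans of_nat_le_iff real_nat_ceiling_ge)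
    show "\<exists>no. \<forall>n\<ge>no. norm (T n / (real n - 1) - a) < r"
    proof (intro exI allI impI)
      fix n assume n: "no \<le> n"
      define N where "N = real n"
      define m where "m = N - 1"
      have n1: "n > 1" using n no by auto
      have m: "1 \<le> m" "M1 \<le> m" "M2 \<le> m" using n no by (auto simp: m_def N_def)
      have K: "hf a N (T n) = 0" "0 < T n" "T n < N - 1" using key[OF n1] by (auto simp: N_def)
      have low: "(a-e)*m < T n"
      proof -
        define x where "x = (a-e)*m"
        have x: "0 < x" using a e m by (simp add: x_def)
        have u: "N-1-x = (1-a+e)*m" by (simp add: x_def m_def algebra_simps)
        have up: "0 < N-1-x" using u a e m by simp
        have "x*(1-a)*((N-1-x)+1) \<le> a*(N-1-x)^2"
          unfolding u using P1[of e a m] e a m unfolding M1_def by (simp add: x_def)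
        hence hx: "hf a N x < 0" using h_neg_at[of a x N] a x up by simp
        show ?thesis
        proof (rule ccontr)
          assume "\<not> ?thesis" hence "T n \<le> x" by (simp add: x_def)
          moreover have "T n < x \<Longrightarrow> hf a N (T n) < hf a N x"
            using h_mono[of a "T n" x N] a K up by auto
          ultimately show False using hx K by force
        qed
      qed
      have upp: "T n < (a+e)*m"
      proof -
        define x where "x = (a+e)*m"
        have x: "0 < x" using a e m by (simp add: x_def)
        have u: "N-1-x = (1-a-e)*m" by (simp add: x_def m_def algebra_simps)
        have up: "0 < N-1-x" using u a e m by simp
        have "a*((N-1-x)+1)^2 \<le> x*(1-a)*(N-1-x)"
          unfolding u using P2[of e a m] e a m unfolding M2_def by (simp add: x_def)
        hence hx: "hf a N x > 0" using h_pos_at[of a x N] a x up by simp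
        show ?thesis
        proof (rule ccontr)
          assume "\<not> ?thesis" hence "x \<le> T n" by (simp add: x_def)
          moreover have "x < T n \<Longrightarrow> hf a N x < hf a N (T n)"
            using h_mono[of a x "T n" N] a K x by auto
          ultimately show False using hx K by force
        qed
      qed
      have mp: "0 < m" using m by simp
      have "a - e < T n / m" using low mp by (simp add: field_simps)
      moreover have "T n / m < a + e" using upp mp by (simp add: field_simps)
      ultimately have "\<bar>T n / m - a\<bar> < e" by auto
      thus "norm (T n / (real n - 1) - a) < r" using e by (simp add: m_def N_def)
    qed
  qed
  show ?thesis using ex lim unfolding T_def a_def by simp
qed

end
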